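(* Let $\Omega\subset\mathbb{R}^N$ be a bounded open set and let $\mathcal{A}:[0,|\Omega|]\to[0,\infty)$ be increasing with $\mathcal{A}(0)=0$, of class $C^3$ on $(0,|\Omega|]$, with $\mathcal{A}'(0^+)=\infty$ and $\lim_{s\to0^+}\frac{\mathcal{A}'(s)\mathcal{A}'''(s)}{(\mathcal{A}''(s))^2}\ge\nu$ for some $\nu>1$. Then for every $p\ge1$, $\mathcal{L}_{\mathcal{A},p}(\Omega)\subsetneq L^p(\Omega)$.
   Context: For an increasing $\mathcal{A}$ with $\mathcal{A}(0)=0$ and $p\ge1$: for measurable $u$ vanishing outside $\Omega$, with distribution function $\mu(t)=|\{x:|u(x)|>t\}|$, set $\|u\|_{\mathcal{A},p}=\big(p\int_0^\infty\mathcal{A}(\mu(t))t^{p-1}\,dt\big)^{1/p}$, and $\mathcal{L}_{\mathcal{A},p}(\Omega)=\{u$ measurable, $u=0$ outside $\Omega$, $\|u\|_{\mathcal{A},p}<\infty\}$. *)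

theory Defs
  imports "HOL-Analysis.Analysis"
begin

definition distrib_fun :: "('a::euclidean_space \<Rightarrow> real) \<Rightarrow> real \<Rightarrow> real" where
  "distrib_fun u t = measure lebesgue {x. \<bar>u x\<bar> > t}"

definition LAp_norm_pow :: "(real \<Rightarrow> real) \<Rightarrow> real \<Rightarrow> ('a::euclidean_space \<Rightarrow> real) \<Rightarrow> ennreal" where
  "LAp_norm_pow A p u =
     ennreal p * (\<integral>\<^sup>+ t. indicator {0<..} t * ennreal (A (distrib_fun u t) * t powr (p - 1)) \<partial>lborel)"

(* L_{A,p}(Omega): measurable, vanishing outside Omega, finite ||u||_{A,p}
   (finiteness of ||u||_{A,p} is equivalent to finiteness of its p-th power) *)
definition LAp :: "(real \<Rightarrow> real) \<Rightarrow> real \<Rightarrow> 'a::euclidean_space set \<Rightarrow> ('a \<Rightarrow> real) set" where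
  "LAp A p \<Omega> = {u. u \<in> borel_measurable lebesgue \<and> (\<forall>x. x \<notin> \<Omega> \<longrightarrow> u x = 0)
                     \<and> LAp_norm_pow A p u < \<infinity>}"

definition Lp_space :: "real \<Rightarrow> 'a::euclidean_space set \<Rightarrow> ('a \<Rightarrow> real) set" where
  "Lp_space p \<Omega> = {u. u \<in> borel_measurable lebesgue \<and> (\<forall>x. x \<notin> \<Omega> \<longrightarrow> u x = 0)
                     \<and> (\<integral>\<^sup>+ x. ennreal (\<bar>u x\<bar> powr p) \<partial>lebesgue) < \<infinity>}"

end

theory Submission
  imports Defs
begin


lemma sigma_finite_lebesgue: "sigma_finite_measure (lebesgue :: 'a::euclidean_space measure)"
proof
  obtain A :: "'a set set" where A: "countable A" "A \<subseteq> sets lborel" "\<Union>A = space lborel"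
    "\<forall>a\<in>A. emeasure lborel a \<noteq> \<infinity>"
    using lborel.sigma_finite_countable by metis
  show "\<exists>A::'a set set. countable A \<and> A \<subseteq> sets lebesgue \<and> \<Union>A = space lebesgue \<and> (\<forall>a\<in>A. emeasure lebesgue a \<noteq> \<infinity>)"
    using A by (intro exI[of _ A]) auto
qed

lemma powr_nn_integral:
  fixes a p :: real
  assumes "a \<ge> 0" "p \<ge> 1"
  shows "(\<integral>\<^sup>+t. indicator {0<..<a} t * ennreal (p * t powr (p-1)) \<partial>lborel) = ennreal (a powr p)"
proof -
  have "((\<lambda>t. p * t powr (p-1)) has_integral (a powr p - 0 powr p)) {0..a}"
  proof (rule fundamental_theorem_of_calculus_interior)
    show "continuous_on {0..a} (\<lambda>t. t powr p)"
      using assms by (intro continuous_on_powr' continuous_intros) auto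
    fix x assume x: "x \<in> {0<..<a}"
    show "((\<lambda>t. t powr p) has_vector_derivative p * x powr (p - 1)) (at x)"
      using x by (auto intro!: derivative_eq_intros simp: has_real_derivative_iff_has_vector_derivative[symmetric])
  qed (use assms in auto)
  then have h: "((\<lambda>t. p * t powr (p-1)) has_integral (a powr p)) {0..a}" using assms by simp
  have "(\<integral>\<^sup>+t. indicator {0..a} t * ennreal (p * t powr (p-1)) \<partial>lborel) = ennreal (a powr p)"
    using nn_integral_has_integral_lebesgue[OF _ h] assms by (simp add: indicator_mult_ennreal)
  moreover have "(\<integral>\<^sup>+t. indicator {0<..<a} t * ennreal (p * t powr (p-1)) \<partial>lborel)
      = (\<integral>\<^sup>+t. indicator {0..a} t * ennreal (p * t powr (p-1)) \<partial>lborel)"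
    by (intro nn_integral_cong_AE eventually_mono[OF AE_lborel_singleton[of a]]) (auto simp: indicator_def)
  ultimately show ?thesis by simp
qed

lemma lev_set_meas[measurable]:
  fixes u :: "'a::euclidean_space \<Rightarrow> real"
  assumes [measurable]: "u \<in> borel_measurable lebesgue"
  shows "{x. t < \<bar>u x\<bar>} \<in> sets lebesgue"
proof -
  have "{x\<in>space lebesgue. t < \<bar>u x\<bar>} \<in> sets lebesgue" by measurable
  thus ?thesis by simp
qed

lemma layer_cake:
  fixes u :: "'a::euclidean_space \<Rightarrow> real" and p :: real
  assumes u[measurable]: "u \<in> borel_measurable lebesgue" and p: "p \<ge> 1"
  shows "(\<integral>\<^sup>+x. ennreal (\<bar>u x\<bar> powr p) \<partial>lebesgue)
    = (\<integral>\<^sup>+t. indicator {0<..} t * ennreal (p * t powr (p-1)) * emeasure lebesgue {x. t < \<bar>u x\<bar>} \<partial>lborel)"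
proof -
  interpret L: sigma_finite_measure "lebesgue :: 'a measure" by (rule sigma_finite_lebesgue)
  interpret P: pair_sigma_finite "lebesgue::'a measure" lborel ..
  have "(\<integral>\<^sup>+x. ennreal (\<bar>u x\<bar> powr p) \<partial>lebesgue)
     = (\<integral>\<^sup>+x. (\<integral>\<^sup>+t. (if 0 < t \<and> t < \<bar>u x\<bar> then ennreal (p * t powr (p-1)) else 0) \<partial>lborel) \<partial>lebesgue)"
  proof (intro nn_integral_cong)
    fix x
    show "ennreal (\<bar>u x\<bar> powr p) = (\<integral>\<^sup>+t. (if 0 < t \<and> t < \<bar>u x\<bar> then ennreal (p * t powr (p-1)) else 0) \<partial>lborel)"
      unfolding powr_nn_integral[of "\<bar>u x\<bar>" p, OF abs_ge_zero p, symmetric]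
      by (intro nn_integral_cong) (auto simp: indicator_def)
  qed
  also have "\<dots> = (\<integral>\<^sup>+t. (\<integral>\<^sup>+x. (if 0 < t \<and> t < \<bar>u x\<bar> then ennreal (p * t powr (p-1)) else 0) \<partial>lebesgue) \<partial>lborel)"
    by (rule P.Fubini'[symmetric]) measurable
  also have "\<dots> = (\<integral>\<^sup>+t. indicator {0<..} t * ennreal (p * t powr (p-1)) * emeasure lebesgue {x. t < \<bar>u x\<bar>} \<partial>lborel)"
  proof (intro nn_integral_cong)
    fix t :: real
    have "(\<integral>\<^sup>+x. (if 0 < t \<and> t < \<bar>u x\<bar> then ennreal (p * t powr (p-1)) else 0) \<partial>lebesgue)
       = (\<integral>\<^sup>+x. (indicator {0<..} t * ennreal (p * t powr (p-1))) * indicator {x. t < \<bar>u x\<bar>} x \<partial>lebesgue)"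
      by (intro nn_integral_cong) (auto simp: indicator_def)
    also have "\<dots> = indicator {0<..} t * ennreal (p * t powr (p-1)) * emeasure lebesgue {x. t < \<bar>u x\<bar>}"
      by (rule nn_integral_cmult_indicator) (rule lev_set_meas[OF u])
    finally show "(\<integral>\<^sup>+x. (if 0 < t \<and> t < \<bar>u x\<bar> then ennreal (p * t powr (p-1)) else 0) \<partial>lebesgue) = indicator {0<..} t * ennreal (p * t powr (p-1)) * emeasure lebesgue {x. t < \<bar>u x\<bar>}" .
  qed
  finally show ?thesis .
qed

lemma A_lower:
  fixes A A1 :: "real \<Rightarrow> real" and M K :: real
  assumes M: "0 < M" and der: "\<forall>s\<in>{0<..M}. (A has_real_derivative A1 s) (at s within {0<..M})"
    and lim: "filterlim A1 at_top (at_right 0)" and nn: "\<forall>s\<in>{0..M}. A s \<ge> 0"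
  shows "\<exists>\<delta>>0. \<delta> < M \<and> (\<forall>s. 0 < s \<and> s \<le> \<delta> \<longrightarrow> K * s \<le> A s)"
proof -
  have "eventually (\<lambda>x. K \<le> A1 x) (at_right 0)"
    using lim by (simp add: filterlim_at_top)
  then obtain b where b0: "b > 0" and b: "\<And>y. 0 < y \<Longrightarrow> y < b \<Longrightarrow> K \<le> A1 y"
    unfolding eventually_at_right_field by blast
  define \<delta> where "\<delta> = min (b/2) (M/2)"
  have d: "\<delta> > 0" "\<delta> < M" "\<delta> < b" using b0 M unfolding \<delta>_def by linarith+
  have D: "DERIV A x :> A1 x" if "0 < x" "x < M" for x
  proof -
    have "x \<in> {0<..M}" using that by simp
    then have "(A has_real_derivative A1 x) (at x within {0<..M})" using der by blast
    then have "(A has_real_derivative A1 x) (at x within {0<..<M})"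
      by (rule DERIV_subset) auto
    moreover have "at x within {0<..<M} = at x"
      by (rule at_within_open) (use that in auto)
    ultimately show ?thesis by simp
  qed
  have "K * s \<le> A s" if s: "0 < s" "s \<le> \<delta>" for s
  proof -
    have As: "A s \<ge> 0" using nn s d by simp
    have main: "K * s - K * e \<le> A s" if e: "0 < e" "e < s" for e
    proof -
      have "A e - K * e \<le> A s - K * s"
      proof (rule DERIV_nonneg_imp_nondecreasing[of e s "\<lambda>t. A t - K * t"])
        show "e \<le> s" using e by simp
        fix x assume x: "e \<le> x" "x \<le> s"
        have x0: "0 < x" "x < M" "x < b" using x e s d by linarith+
        have d1: "DERIV (\<lambda>t. K * t) x :> K * 1"
          by (rule DERIV_cmult) (rule DERIV_ident)
        have "DERIV (\<lambda>t. A t - K * t) x :> A1 x - K * 1"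
          by (rule DERIV_diff[OF D[OF x0(1) x0(2)] d1])
        moreover have "A1 x - K * 1 \<ge> 0" using b[OF x0(1) x0(3)] by simp
        ultimately show "\<exists>y. DERIV (\<lambda>t. A t - K * t) x :> y \<and> y \<ge> 0" by blast
      qed
      moreover have "A e \<ge> 0" using nn e s d by simp
      ultimately show ?thesis by linarith
    qed
    show ?thesis
    proof (cases "K \<le> 0")
      case True
      then have "K * s \<le> 0" using s by (simp add: mult_nonpos_nonneg)
      then show ?thesis using As by linarith
    next
      case False
      show ?thesis
      proof (rule field_le_epsilon)
        fix e :: real assume e: "0 < e"
        define e' where "e' = min (s/2) (e/K)"
        have "e/K > 0" using e False by simp
        then have e1: "0 < e'" "e' < s" using s unfolding e'_def by linarith+
        have "e' \<le> e/K" unfolding e'_def by linarith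
        then have "K * e' \<le> K * (e/K)" using False by (intro mult_left_mono) auto
        then have "K * e' \<le> e" using False by simp
        with main[OF e1] show "K * s \<le> A s + e" by linarith
      qed
    qed
  qed
  thus ?thesis using d by blast
qed
lemma F_meas:
  fixes A \<mu> :: "real \<Rightarrow> real" and M p :: real
  assumes mono: "mono_on {0..M} A" and mu: "\<And>t. t > 0 \<Longrightarrow> \<mu> t \<in> {0..M}"
    and anti: "\<And>s t. 0 < s \<Longrightarrow> s \<le> t \<Longrightarrow> \<mu> t \<le> \<mu> s"
  shows "(\<lambda>t. indicator {0<..} t * ennreal (A (\<mu> t) * t powr (p-1))) \<in> borel_measurable lborel"
proof -
  have "mono_on {0<..} (\<lambda>t. - A (\<mu> t))"
  proof (rule mono_onI)
    fix s t :: real assume "s \<in> {0<..}" "t \<in> {0<..}" "s \<le> t"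
    then show "- A (\<mu> s) \<le> - A (\<mu> t)"
      using mono_onD[OF mono, of "\<mu> t" "\<mu> s"] mu[of s] mu[of t] anti[of s t] by auto
  qed
  then have g[measurable]: "(\<lambda>t. - A (\<mu> t)) \<in> borel_measurable (restrict_space borel {0<..})"
    by (rule borel_measurable_mono_on_fnc)
  have "(\<lambda>t. ennreal (- (- A (\<mu> t)) * t powr (p-1))) \<in> borel_measurable (restrict_space borel {0<..})"
    by (intro measurable_compose[OF _ measurable_ennreal] borel_measurable_times borel_measurable_uminus g
          measurable_restrict_space1) measurable
  then have h: "(\<lambda>t. ennreal (A (\<mu> t) * t powr (p-1))) \<in> borel_measurable (restrict_space borel {0<..})"
    by simp
  have "(\<lambda>t. if t \<in> {0<..} then ennreal (A (\<mu> t) * t powr (p-1)) else 0) \<in> borel_measurable borel"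
    by (subst measurable_If_restrict_space_iff) (auto intro: h simp del: greaterThan_iff)
  moreover have "(\<lambda>t. indicator {0<..} t * ennreal (A (\<mu> t) * t powr (p-1)))
     = (\<lambda>t. if t \<in> {0<..} then ennreal (A (\<mu> t) * t powr (p-1)) else 0)"
    by (auto simp: indicator_def fun_eq_iff)
  ultimately show ?thesis by simp
qed

lemma LAp_subset:
  fixes \<Omega> :: "'a::euclidean_space set" and A :: "real \<Rightarrow> real" and p c :: real
  assumes Om: "\<Omega> \<in> sets lebesgue" "emeasure lebesgue \<Omega> < \<infinity>"
    and c: "c > 0" "\<forall>s\<in>{0..measure lebesgue \<Omega>}. c * s \<le> A s"
    and mono: "mono_on {0..measure lebesgue \<Omega>} A"
    and p: "p \<ge> 1"
  shows "LAp A p \<Omega> \<subseteq> Lp_space p \<Omega>"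
proof
  fix u assume "u \<in> LAp A p \<Omega>"
  then have um[measurable]: "u \<in> borel_measurable lebesgue" and van: "\<forall>x. x\<notin>\<Omega> \<longrightarrow> u x = 0"
    and fin: "LAp_norm_pow A p u < \<infinity>" by (auto simp: LAp_def)
  define \<mu> where "\<mu> = distrib_fun u"
  have Of: "\<Omega> \<in> fmeasurable lebesgue" using Om by (simp add: fmeasurable_def)
  have sub: "{x. t < \<bar>u x\<bar>} \<subseteq> \<Omega>" if "t \<ge> 0" for t using van that by force
  have fm: "{x. t < \<bar>u x\<bar>} \<in> fmeasurable lebesgue" if "t \<ge> 0" for t
    by (rule fmeasurableI2[OF Of sub[OF that] lev_set_meas[OF um]])
  have em: "emeasure lebesgue {x. t < \<bar>u x\<bar>} = ennreal (\<mu> t)" if "t \<ge> 0" for t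
    using fm[OF that] by (simp add: emeasure_eq_measure2 \<mu>_def distrib_fun_def)
  have muM: "\<mu> t \<in> {0..measure lebesgue \<Omega>}" if "t \<ge> 0" for t
    using measure_mono_fmeasurable[OF sub[OF that] lev_set_meas[OF um] Of]
    by (simp add: \<mu>_def distrib_fun_def)
  have anti: "\<mu> t \<le> \<mu> s" if "0 < s" "s \<le> t" for s t
  proof -
    have "{x. t < \<bar>u x\<bar>} \<subseteq> {x. s < \<bar>u x\<bar>}" using that by auto
    from measure_mono_fmeasurable[OF this lev_set_meas[OF um] fm[of s]] that
    show ?thesis by (simp add: \<mu>_def distrib_fun_def)
  qed
  have Fm: "(\<lambda>t. indicator {0<..} t * ennreal (A (\<mu> t) * t powr (p-1))) \<in> borel_measurable lborel"
    by (rule F_meas[OF mono]) (use muM anti in auto)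
  have "(\<integral>\<^sup>+x. ennreal (\<bar>u x\<bar> powr p) \<partial>lebesgue)
    = (\<integral>\<^sup>+t. indicator {0<..} t * ennreal (p * t powr (p-1)) * emeasure lebesgue {x. t < \<bar>u x\<bar>} \<partial>lborel)"
    by (rule layer_cake[OF um p])
  also have "\<dots> \<le> (\<integral>\<^sup>+t. ennreal (p / c) * (indicator {0<..} t * ennreal (A (\<mu> t) * t powr (p-1))) \<partial>lborel)"
  proof (rule nn_integral_mono)
    fix t :: real
    show "indicator {0<..} t * ennreal (p * t powr (p-1)) * emeasure lebesgue {x. t < \<bar>u x\<bar>}
      \<le> ennreal (p / c) * (indicator {0<..} t * ennreal (A (\<mu> t) * t powr (p-1)))"
    proof (cases "t > 0")
      case False then show ?thesis by simp
    next
      case True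
      have cm: "c * \<mu> t \<le> A (\<mu> t)" using c(2) muM[of t] True by auto
      have "\<mu> t \<le> A (\<mu> t) / c" using cm c(1) by (simp add: field_simps)
      moreover have "0 \<le> p * t powr (p-1)" using p by simp
      ultimately have "p * t powr (p-1) * \<mu> t \<le> p * t powr (p-1) * (A (\<mu> t) / c)"
        by (rule mult_left_mono)
      also have "\<dots> = p / c * (A (\<mu> t) * t powr (p-1))" by simp
      finally have ineq: "p * t powr (p-1) * \<mu> t \<le> p / c * (A (\<mu> t) * t powr (p-1))" .
      have A0: "0 \<le> A (\<mu> t)" using cm muM[of t] True c(1) by (smt (verit) atLeastAtMost_iff mult_nonneg_nonneg)
      have "indicator {0<..} t * ennreal (p * t powr (p-1)) * emeasure lebesgue {x. t < \<bar>u x\<bar>}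
          = ennreal (p * t powr (p-1) * \<mu> t)"
        using True em[of t] muM[of t] p by (simp add: ennreal_mult)
      also have "\<dots> \<le> ennreal (p / c * (A (\<mu> t) * t powr (p-1)))"
        by (rule ennreal_leI[OF ineq])
      also have "\<dots> = ennreal (p / c) * (indicator {0<..} t * ennreal (A (\<mu> t) * t powr (p-1)))"
        using True A0 p c(1) by (simp add: ennreal_mult[symmetric])
      finally show ?thesis .
    qed
  qed
  also have "\<dots> = ennreal (p / c) * (\<integral>\<^sup>+t. indicator {0<..} t * ennreal (A (\<mu> t) * t powr (p-1)) \<partial>lborel)"
    by (rule nn_integral_cmult[OF Fm])
  also have "\<dots> < \<infinity>"
  proof -
    have "ennreal p * (\<integral>\<^sup>+t. indicator {0<..} t * ennreal (A (\<mu> t) * t powr (p-1)) \<partial>lborel) < \<infinity>"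
      using fin by (simp add: LAp_norm_pow_def \<mu>_def distrib_fun_def)
    then have "(\<integral>\<^sup>+t. indicator {0<..} t * ennreal (A (\<mu> t) * t powr (p-1)) \<partial>lborel) < \<infinity>"
      using p by (auto simp: ennreal_mult_less_top)
    then show ?thesis by (simp add: ennreal_mult_less_top)
  qed
  finally show "u \<in> Lp_space p \<Omega>" using um van by (simp add: Lp_space_def)
qed



lemma powr_nn_integral_ab:
  fixes a b p :: real
  assumes "0 \<le> a" "a \<le> b" "p \<ge> 1"
  shows "(\<integral>\<^sup>+t. indicator {a<..<b} t * ennreal (p * t powr (p-1)) \<partial>lborel) = ennreal (b powr p - a powr p)"
proof -
  have "((\<lambda>t. p * t powr (p-1)) has_integral (b powr p - a powr p)) {a..b}"
  proof (rule fundamental_theorem_of_calculus_interior)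
    show "continuous_on {a..b} (\<lambda>t. t powr p)"
      using assms by (intro continuous_on_powr' continuous_intros) auto
    fix x assume x: "x \<in> {a<..<b}"
    show "((\<lambda>t. t powr p) has_vector_derivative p * x powr (p - 1)) (at x)"
      using x assms by (auto intro!: derivative_eq_intros simp: has_real_derivative_iff_has_vector_derivative[symmetric])
  qed (use assms in auto)
  moreover have "b powr p - a powr p \<ge> 0" using assms by (simp add: powr_mono2)
  ultimately have "(\<integral>\<^sup>+t. indicator {a..b} t * ennreal (p * t powr (p-1)) \<partial>lborel) = ennreal (b powr p - a powr p)"
    using nn_integral_has_integral_lebesgue[of "{a..b}" "\<lambda>t. p * t powr (p-1)"] assms
    by (simp add: indicator_mult_ennreal)
  moreover have "(\<integral>\<^sup>+t. indicator {a<..<b} t * ennreal (p * t powr (p-1)) \<partial>lborel)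
      = (\<integral>\<^sup>+t. indicator {a..b} t * ennreal (p * t powr (p-1)) \<partial>lborel)"
    by (intro nn_integral_cong_AE eventually_mono[OF eventually_conj[OF AE_lborel_singleton[of a] AE_lborel_singleton[of b]]])
       (auto simp: indicator_def)
  ultimately show ?thesis by simp
qed

lemma sum_disjoint_le:
  fixes g :: "nat \<Rightarrow> ennreal"
  assumes fin: "finite F" and disj: "\<And>j k. j \<noteq> k \<Longrightarrow> t \<in> I j \<Longrightarrow> t \<notin> I k"
    and le: "\<And>k. t \<in> I k \<Longrightarrow> g k \<le> h"
  shows "(\<Sum>k\<in>F. indicator (I k) t * g k) \<le> h"
proof (cases "\<exists>k\<in>F. t \<in> I k")
  case True
  then obtain k where k: "k \<in> F" "t \<in> I k" by blast
  have "(\<Sum>k\<in>F. indicator (I k) t * g k) = indicator (I k) t * g k + (\<Sum>j\<in>F-{k}. indicator (I j) t * g j)"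
    using sum.remove[OF fin k(1), of "\<lambda>k. indicator (I k) t * g k"] .
  also have "(\<Sum>j\<in>F-{k}. indicator (I j) t * g j) = 0"
    using disj[of k] k by (intro sum.neutral) auto
  finally show ?thesis using k le[of k] by simp
next
  case False
  then have "(\<Sum>k\<in>F. indicator (I k) t * g k) = 0" by (intro sum.neutral) auto
  then show ?thesis by simp
qed

lemma ennreal_unbounded:
  fixes X :: ennreal
  assumes "\<And>K::nat. ennreal (real K) \<le> X"
  shows "\<not> X < \<infinity>"
proof
  assume "X < \<infinity>"
  then obtain r where r: "r \<ge> 0" "X = ennreal r" using less_top_ennreal by auto
  have "ennreal (real (nat \<lceil>r\<rceil> + 1)) \<le> ennreal r" using assms[of "nat \<lceil>r\<rceil> + 1"] r by simp
  then have "real (nat \<lceil>r\<rceil> + 1) \<le> r" using r by (subst (asm) ennreal_le_iff) auto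
  then show False by linarith
qed


lemma LAp_strict:
  fixes \<Omega> :: "'a::euclidean_space set" and A :: "real \<Rightarrow> real" and p :: real
  assumes op: "open \<Omega>" and ne: "\<Omega> \<noteq> {}" and Om: "emeasure lebesgue \<Omega> < \<infinity>"
    and mono: "mono_on {0..measure lebesgue \<Omega>} A"
    and Alow: "\<And>K. \<exists>\<delta>>0. \<forall>s. 0 < s \<and> s \<le> \<delta> \<longrightarrow> K * s \<le> A s"
    and p: "p \<ge> 1"
  shows "\<exists>u. u \<in> Lp_space p \<Omega> \<and> u \<notin> LAp A p \<Omega>"
proof -
  obtain x0 where x0: "x0 \<in> \<Omega>" using ne by blast
  obtain R where R: "R > 0" "ball x0 R \<subseteq> \<Omega>" using op x0 by (meson openE)
  define N where "N = DIM('a)"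
  define C where "C = unit_ball_vol (real N)"
  have N: "N > 0" by (simp add: N_def)
  have C: "C > 0" by (simp add: C_def)
  have Oms: "\<Omega> \<in> sets lebesgue" using op by simp
  have Of: "\<Omega> \<in> fmeasurable lebesgue" using Om Oms by (simp add: fmeasurable_def)
  have emb: "emeasure lebesgue (ball x0 r) = ennreal (C * r ^ N)" if "r \<ge> 0" for r
    using that by (simp add: emeasure_ball C_def N_def)
  have mb: "measure lebesgue (ball x0 r) = C * r ^ N" if "r \<ge> 0" for r
    using emb[of r] that C by (simp add: measure_def)
  have "\<forall>k::nat. \<exists>\<rho>. 0 < \<rho> \<and> \<rho> \<le> R \<and> (\<forall>s. 0 < s \<and> s \<le> C * \<rho> ^ N \<longrightarrow> 2 ^ k * s \<le> A s)"
  proof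
    fix k :: nat
    obtain \<delta> where d: "\<delta> > 0" "\<forall>s. 0 < s \<and> s \<le> \<delta> \<longrightarrow> 2 ^ k * s \<le> A s" using Alow by blast
    define \<rho> where "\<rho> = min R (root N (\<delta> / C))"
    have rp: "0 < \<rho>" using R d C N by (simp add: \<rho>_def)
    have "\<rho> ^ N \<le> (root N (\<delta> / C)) ^ N"
      using rp by (intro power_mono) (auto simp: \<rho>_def)
    also have "\<dots> = \<delta> / C" using d C N by simp
    finally have "C * \<rho> ^ N \<le> \<delta>" using C by (simp add: field_simps)
    then show "\<exists>\<rho>. 0 < \<rho> \<and> \<rho> \<le> R \<and> (\<forall>s. 0 < s \<and> s \<le> C * \<rho> ^ N \<longrightarrow> 2 ^ k * s \<le> A s)"
      using rp d by (intro exI[of _ \<rho>]) (auto simp: \<rho>_def)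
  qed
  then obtain \<rho> where \<rho>: "\<And>k. 0 < \<rho> k" "\<And>k. \<rho> k \<le> R"
     "\<And>k s. 0 < s \<Longrightarrow> s \<le> C * \<rho> k ^ N \<Longrightarrow> 2 ^ k * s \<le> A s"
    by metis
  define r where "r k = Min (\<rho> ` {..k})" for k
  have r_pos: "0 < r k" for k using \<rho>(1) by (simp add: r_def)
  have r_le: "r k \<le> \<rho> k" for k by (simp add: r_def)
  have r_R: "r k \<le> R" for k using r_le[of k] \<rho>(2)[of k] by linarith
  have r_anti: "r k \<le> r j" if "j \<le> k" for j k
    unfolding r_def using that by (intro Min_antimono) auto
  define m where "m k = C * r k ^ N" for k
  have m_pos: "0 < m k" for k using C r_pos by (simp add: m_def)
  have m_A: "2 ^ k * m k \<le> A (m k)" for k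
  proof -
    have "r k ^ N \<le> \<rho> k ^ N" using r_pos[of k] r_le[of k] by (intro power_mono) auto
    then have "m k \<le> C * \<rho> k ^ N" using C by (simp add: m_def)
    then show ?thesis using \<rho>(3) m_pos by blast
  qed
  define E where "E k = ball x0 (r k)" for k
  have E_sub: "E k \<subseteq> \<Omega>" for k using R(2) r_R[of k] by (auto simp: E_def)
  have E_nest: "E k \<subseteq> E j" if "j \<le> k" for j k using r_anti[OF that] by (auto simp: E_def)
  have E_em: "emeasure lebesgue (E k) = ennreal (m k)" for k
    using emb[of "r k"] r_pos[of k] unfolding E_def m_def by simp
  have E_m: "measure lebesgue (E k) = m k" for k using mb[of "r k"] r_pos[of k] by (simp add: E_def m_def)
  have m_M: "m k \<le> measure lebesgue \<Omega>" for k
    using measure_mono_fmeasurable[OF E_sub[of k] _ Of] E_m[of k] by (simp add: E_def)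
  define c where "c k = 1 / (2 ^ k * m k)" for k
  have c_pos: "0 < c k" for k using m_pos[of k] by (simp add: c_def)
  define S where "S x = (\<Sum>k. ennreal (c k) * indicator (E k) x)" for x
  define u where "u x = enn2real (S x) powr (1/p)" for x
  have Es[measurable]: "E k \<in> sets lebesgue" for k by (simp add: E_def)
  have Sm[measurable]: "S \<in> borel_measurable lebesgue"
    unfolding S_def by measurable
  have um[measurable]: "u \<in> borel_measurable lebesgue"
    unfolding u_def by measurable
  have S0: "S x = 0" if "x \<notin> \<Omega>" for x
  proof -
    have "\<And>k. x \<notin> E k" using E_sub that by blast
    then show ?thesis by (simp add: S_def)
  qed
  have u0: "u x = 0" if "x \<notin> \<Omega>" for x using S0[OF that] by (simp add: u_def)
  have intS: "(\<integral>\<^sup>+x. S x \<partial>lebesgue) = ennreal 2"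
  proof -
    have "(\<integral>\<^sup>+x. S x \<partial>lebesgue) = (\<Sum>k. \<integral>\<^sup>+x. ennreal (c k) * indicator (E k) x \<partial>lebesgue)"
      unfolding S_def by (rule nn_integral_suminf) measurable
    also have "\<dots> = (\<Sum>k. ennreal ((1/2)^k))"
    proof (intro suminf_cong)
      fix k
      have "(\<integral>\<^sup>+x. ennreal (c k) * indicator (E k) x \<partial>lebesgue) = ennreal (c k) * ennreal (m k)"
        by (simp add: nn_integral_cmult_indicator E_em)
      also have "\<dots> = ennreal (c k * m k)" using c_pos[of k] m_pos[of k] by (simp add: ennreal_mult)
      also have "c k * m k = (1/2)^k" using m_pos[of k] by (simp add: c_def power_one_over)
      finally show "(\<integral>\<^sup>+x. ennreal (c k) * indicator (E k) x \<partial>lebesgue) = ennreal ((1/2)^k)" .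
    qed
    also have "\<dots> = ennreal (\<Sum>k. (1/2::real)^k)"
      by (intro suminf_ennreal2) (auto intro: summable_geometric)
    also have "(\<Sum>k. (1/2::real)^k) = 2" using suminf_geometric[of "1/2::real"] by simp
    finally show ?thesis .
  qed
  have up: "ennreal (\<bar>u x\<bar> powr p) \<le> S x" for x
  proof -
    have "\<bar>u x\<bar> powr p = enn2real (S x)" using p by (simp add: u_def powr_powr)
    then show ?thesis by (cases "S x = \<infinity>") (auto simp: ennreal_enn2real_if)
  qed
  have uLp: "u \<in> Lp_space p \<Omega>"
  proof -
    have "(\<integral>\<^sup>+x. ennreal (\<bar>u x\<bar> powr p) \<partial>lebesgue) \<le> (\<integral>\<^sup>+x. S x \<partial>lebesgue)"
      by (intro nn_integral_mono up)
    then have "(\<integral>\<^sup>+x. ennreal (\<bar>u x\<bar> powr p) \<partial>lebesgue) < \<infinity>" using intS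
      by (simp add: le_less_trans)
    then show ?thesis using um u0 by (simp add: Lp_space_def)
  qed
  have AE: "AE x in lebesgue. S x \<noteq> \<infinity>"
    using intS by (intro nn_integral_PInf_AE) auto
  define Nl where "Nl = {x. S x = \<infinity>}"
  have Nl_null: "Nl \<in> null_sets lebesgue"
  proof -
    have "{x\<in>space lebesgue. \<not> S x \<noteq> \<infinity>} \<in> sets lebesgue" by measurable
    with AE have "{x\<in>space lebesgue. \<not> S x \<noteq> \<infinity>} \<in> null_sets lebesgue" by (simp add: AE_iff_null)
    then show ?thesis by (simp add: Nl_def)
  qed
  define Sp where "Sp k = (\<Sum>j<k. c j)" for k
  define T where "T k = Sp k powr (1/p)" for k
  have Sp_nn: "0 \<le> Sp k" for k using c_pos by (simp add: Sp_def sum_nonneg less_imp_le)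
  have Sp_mono: "Sp j \<le> Sp k" if "j \<le> k" for j k
    unfolding Sp_def using that c_pos by (intro sum_mono2) (auto simp: less_imp_le)
  have T_nn: "0 \<le> T k" for k by (simp add: T_def)
  have T_mono: "T j \<le> T k" if "j \<le> k" for j k
    unfolding T_def using Sp_mono[OF that] Sp_nn p by (intro powr_mono2) auto
  have T_pow: "T k powr p = Sp k" for k using Sp_nn[of k] p by (simp add: T_def powr_powr)
  define \<mu> where "\<mu> = distrib_fun u"
  have sub: "{x. t < \<bar>u x\<bar>} \<subseteq> \<Omega>" if "t \<ge> 0" for t using u0 that by force
  have fm: "{x. t < \<bar>u x\<bar>} \<in> fmeasurable lebesgue" if "t \<ge> 0" for t
    by (rule fmeasurableI2[OF Of sub[OF that] lev_set_meas[OF um]])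
  have muM: "\<mu> t \<in> {0..measure lebesgue \<Omega>}" if "t \<ge> 0" for t
    using measure_mono_fmeasurable[OF sub[OF that] lev_set_meas[OF um] Of]
    by (simp add: \<mu>_def distrib_fun_def)
  have key: "m k \<le> \<mu> t" if t: "T k < t" "t < T (Suc k)" for k t
  proof -
    have t0: "0 < t" using T_nn[of k] t by linarith
    have "E k - Nl \<subseteq> {x. t < \<bar>u x\<bar>}"
    proof
      fix x assume x: "x \<in> E k - Nl"
      have Sx: "S x \<noteq> \<infinity>" using x by (simp add: Nl_def)
      have "(\<Sum>j<Suc k. ennreal (c j) * indicator (E j) x) \<le> S x"
        unfolding S_def by (intro sum_le_suminf) auto
      moreover have "(\<Sum>j<Suc k. ennreal (c j) * indicator (E j) x) = (\<Sum>j<Suc k. ennreal (c j))"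
      proof (intro sum.cong refl)
        fix j assume "j \<in> {..<Suc k}"
        then have "x \<in> E j" using x E_nest[of j k] by auto
        then show "ennreal (c j) * indicator (E j) x = ennreal (c j)" by simp
      qed
      moreover have "(\<Sum>j<Suc k. ennreal (c j)) = ennreal (Sp (Suc k))"
        unfolding Sp_def using c_pos by (intro sum_ennreal) (auto simp: less_imp_le)
      ultimately have "ennreal (Sp (Suc k)) \<le> S x" by simp
      then have "enn2real (ennreal (Sp (Suc k))) \<le> enn2real (S x)"
        using Sx by (intro enn2real_mono) (auto simp: top_unique less_top)
      then have "Sp (Suc k) \<le> enn2real (S x)" using Sp_nn by simp
      then have "T (Suc k) \<le> u x" unfolding T_def u_def using Sp_nn p by (intro powr_mono2) auto
      then show "x \<in> {x. t < \<bar>u x\<bar>}" using t by auto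
    qed
    moreover have "E k - Nl \<in> sets lebesgue" using Nl_null by auto
    ultimately have "measure lebesgue (E k - Nl) \<le> \<mu> t"
      using measure_mono_fmeasurable[OF _ _ fm] t0 by (simp add: \<mu>_def distrib_fun_def)
    moreover have "measure lebesgue (E k - Nl) = m k"
      using measure_Diff_null_set[OF Es[of k] Nl_null] E_m by simp
    ultimately show ?thesis by simp
  qed
  have keyA: "2 ^ k * m k \<le> A (\<mu> t)" if t: "T k < t" "t < T (Suc k)" for k t
  proof -
    have t0: "0 < t" using T_nn[of k] t by linarith
    have "A (m k) \<le> A (\<mu> t)"
      using mono_onD[OF mono, of "m k" "\<mu> t"] key[OF t] muM[of t] t0 m_pos[of k] m_M[of k] by auto
    then show ?thesis using m_A[of k] by linarith
  qed
  define I where "I k = {T k<..<T (Suc k)}" for k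
  have disj: "t \<notin> I k" if "j \<noteq> k" "t \<in> I j" for j k t
  proof (cases "j < k")
    case True
    then have "T (Suc j) \<le> T k" by (intro T_mono) auto
    then show ?thesis using that by (auto simp: I_def)
  next
    case False
    then have "T (Suc k) \<le> T j" using that by (intro T_mono) auto
    then show ?thesis using that by (auto simp: I_def)
  qed
  define a where "a k = 2 ^ k * m k / p" for k
  have a_nn: "0 \<le> a k" for k using m_pos[of k] p by (simp add: a_def)
  define F where "F t = indicator {0<..} t * ennreal (A (\<mu> t) * t powr (p-1))" for t
  have bound: "ennreal (real K) \<le> LAp_norm_pow A p u" for K
  proof -
    have "(\<Sum>k<K. ennreal (1/p)) \<le> (\<Sum>k<K. \<integral>\<^sup>+t. indicator (I k) t * (ennreal (a k) * ennreal (p * t powr (p-1))) \<partial>lborel)"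
    proof (intro sum_mono)
      fix k
      have "(\<integral>\<^sup>+t. indicator (I k) t * (ennreal (a k) * ennreal (p * t powr (p-1))) \<partial>lborel)
          = (\<integral>\<^sup>+t. ennreal (a k) * (indicator (I k) t * ennreal (p * t powr (p-1))) \<partial>lborel)"
        by (intro nn_integral_cong) (simp add: ac_simps)
      also have "\<dots> = ennreal (a k) * (\<integral>\<^sup>+t. indicator (I k) t * ennreal (p * t powr (p-1)) \<partial>lborel)"
        by (rule nn_integral_cmult) (simp add: I_def)
      also have "(\<integral>\<^sup>+t. indicator (I k) t * ennreal (p * t powr (p-1)) \<partial>lborel) = ennreal (c k)"
        unfolding I_def using T_nn T_mono[of k "Suc k"] p
        by (subst powr_nn_integral_ab) (auto simp: T_pow Sp_def)
      also have "ennreal (a k) * ennreal (c k) = ennreal (1/p)"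
        using a_nn[of k] c_pos[of k] m_pos[of k] p by (simp add: ennreal_mult[symmetric] a_def c_def)
      finally show "ennreal (1/p) \<le> (\<integral>\<^sup>+t. indicator (I k) t * (ennreal (a k) * ennreal (p * t powr (p-1))) \<partial>lborel)"
        by simp
    qed
    also have "\<dots> = (\<integral>\<^sup>+t. (\<Sum>k<K. indicator (I k) t * (ennreal (a k) * ennreal (p * t powr (p-1)))) \<partial>lborel)"
      by (rule nn_integral_sum[symmetric]) (simp add: I_def)
    also have "\<dots> \<le> (\<integral>\<^sup>+t. F t \<partial>lborel)"
    proof (intro nn_integral_mono sum_disjoint_le)
      fix t j k assume "j \<noteq> k" "t \<in> I j" then show "t \<notin> I k" using disj by blast
    next
      fix t k assume tk: "t \<in> I k"
      then have t: "T k < t" "t < T (Suc k)" by (auto simp: I_def)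
      have t0: "0 < t" using T_nn[of k] t by linarith
      have "ennreal (a k) * ennreal (p * t powr (p-1)) = ennreal (2 ^ k * m k * t powr (p-1))"
        using a_nn[of k] p by (simp add: ennreal_mult[symmetric] a_def mult.assoc)
      also have "\<dots> \<le> ennreal (A (\<mu> t) * t powr (p-1))"
        using keyA[OF t] by (intro ennreal_leI mult_right_mono) auto
      also have "\<dots> = F t" using t0 by (simp add: F_def)
      finally show "ennreal (a k) * ennreal (p * t powr (p-1)) \<le> F t" .
    qed auto
    finally have fin1: "(\<Sum>k<K. ennreal (1/p)) \<le> (\<integral>\<^sup>+t. F t \<partial>lborel)" .
    have "(\<Sum>k<K. ennreal (1/p)) = ennreal (\<Sum>k<K. 1/p)"
      using p by (intro sum_ennreal) auto
    also have "(\<Sum>k<K. 1/p) = real K / p" by simp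
    finally have "ennreal (real K / p) \<le> (\<integral>\<^sup>+t. F t \<partial>lborel)" using fin1 by simp
    then have "ennreal p * ennreal (real K / p) \<le> ennreal p * (\<integral>\<^sup>+t. F t \<partial>lborel)"
      by (rule mult_left_mono) simp
    moreover have "ennreal p * ennreal (real K / p) = ennreal (real K)"
      using p by (simp add: ennreal_mult[symmetric])
    moreover have "LAp_norm_pow A p u = ennreal p * (\<integral>\<^sup>+t. F t \<partial>lborel)"
      by (simp add: LAp_norm_pow_def F_def \<mu>_def)
    ultimately show ?thesis by simp
  qed
  have "\<not> LAp_norm_pow A p u < \<infinity>"
    by (rule ennreal_unbounded[OF bound])
  then have "u \<notin> LAp A p \<Omega>" by (simp add: LAp_def)
  with uLp show ?thesis by blast
qed


theorem mainTheorem8: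
  fixes \<Omega> :: "'a::euclidean_space set"
    and A A1 A2 A3 :: "real \<Rightarrow> real"
    and \<nu> :: real
  assumes "open \<Omega>" and "bounded \<Omega>" and "\<Omega> \<noteq> {}"
    and "mono_on {0..measure lebesgue \<Omega>} A"
    and "\<forall>s\<in>{0..measure lebesgue \<Omega>}. A s \<ge> 0"
    and "A 0 = 0"
    and "\<forall>s\<in>{0<..measure lebesgue \<Omega>}.
           (A has_real_derivative A1 s) (at s within {0<..measure lebesgue \<Omega>})
         \<and> (A1 has_real_derivative A2 s) (at s within {0<..measure lebesgue \<Omega>})
         \<and> (A2 has_real_derivative A3 s) (at s within {0<..measure lebesgue \<Omega>})"
    and "continuous_on {0<..measure lebesgue \<Omega>} A3"
    and "filterlim A1 at_top (at_right 0)"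
    and "\<nu> > 1"
    and "\<exists>L::ereal. ((\<lambda>s. ereal (A1 s * A3 s / (A2 s)\<^sup>2)) \<longlongrightarrow> L) (at_right 0) \<and> L \<ge> ereal \<nu>"
    and "p \<ge> 1"
  shows "LAp A p \<Omega> \<subset> Lp_space p \<Omega>"
proof -
  note op = assms(1) and bd = assms(2) and ne = assms(3) and mono = assms(4) and nn = assms(5)
    and A0 = assms(6) and lim = assms(9) and p = assms(12)
  define M where "M = measure lebesgue \<Omega>"
  have der: "\<forall>s\<in>{0<..M}. (A has_real_derivative A1 s) (at s within {0<..M})"
    using assms(7) by (simp add: M_def)
  have Oms: "\<Omega> \<in> sets lebesgue" using op by simp
  have Om: "emeasure lebesgue \<Omega> < \<infinity>"
    using op bd emeasure_bounded_finite[OF bd] by simp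
  have Of: "\<Omega> \<in> fmeasurable lebesgue" using Om Oms by (simp add: fmeasurable_def)
  obtain x0 where x0: "x0 \<in> \<Omega>" using ne by blast
  obtain R where R: "R > 0" "ball x0 R \<subseteq> \<Omega>" using op x0 by (meson openE)
  have "0 < measure lebesgue (ball x0 R)" using R by simp
  also have "\<dots> \<le> M" unfolding M_def using R by (intro measure_mono_fmeasurable[OF _ _ Of]) auto
  finally have M0: "0 < M" .
  obtain \<delta> where d: "\<delta> > 0" "\<delta> < M" "\<forall>s. 0 < s \<and> s \<le> \<delta> \<longrightarrow> 1 * s \<le> A s"
    using A_lower[OF M0 der lim, of 1] nn by (auto simp: M_def)
  have c: "\<forall>s\<in>{0..M}. \<delta> / M * s \<le> A s"
  proof
    fix s assume s: "s \<in> {0..M}"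
    have dM: "\<delta> / M \<le> 1" using d M0 by simp
    show "\<delta> / M * s \<le> A s"
    proof (cases "s \<le> \<delta>")
      case True
      show ?thesis
      proof (cases "s = 0")
        case True then show ?thesis using A0 by simp
      next
        case False
        then have "s \<le> A s" using d True s by auto
        moreover have "\<delta> / M * s \<le> 1 * s" using dM s by (intro mult_right_mono) auto
        ultimately show ?thesis by linarith
      qed
    next
      case False
      have "A \<delta> \<le> A s" using mono_onD[OF mono, of \<delta> s] False s d by (auto simp: M_def)
      moreover have "\<delta> \<le> A \<delta>" using d by auto
      moreover have "\<delta> / M * s \<le> \<delta>" using s d M0 by (simp add: field_simps)
      ultimately show ?thesis by linarith
    qed
  qed
  have sub: "LAp A p \<Omega> \<subseteq> Lp_space p \<Omega>"
    by (rule LAp_subset[OF Oms Om _ _ mono p, of "\<delta> / M"]) (use d M0 c in \<open>auto simp: M_def\<close>)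
  have Alow: "\<exists>\<delta>>0. \<forall>s. 0 < s \<and> s \<le> \<delta> \<longrightarrow> K * s \<le> A s" for K
    using A_lower[OF M0 der lim, of K] nn by (auto simp: M_def)
  obtain u where "u \<in> Lp_space p \<Omega>" "u \<notin> LAp A p \<Omega>"
    using LAp_strict[OF op ne Om mono Alow p] by blast
  with sub show ?thesis by blast
qed

end
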